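(* Let $\lambda\in(0,r^\alpha)$ and consider the $\lambda$-NRW on the augmented tree. For $f\in\mathcal D_X$: (i) there exists $C>0$ (depending on $f$) such that for every geodesic ray $(\mathbf x_n)_n$, $|f(\mathbf x_{n+1})-f(\mathbf x_n)|\le C(\lambda/r^\alpha)^{n/2}$ for all $n$, and hence $\lim_{n\to\infty}f(\mathbf x_n)$ exists; (ii) if two geodesic rays $(\mathbf x_n)_n$ and $(\mathbf y_n)_n$ converge to the same point of $K$, then $\lim_nf(\mathbf x_n)=\lim_nf(\mathbf y_n)$.
   Context: Let $\{S_i\}_{i=1}^N$ ($N\ge2$) be contractive similitudes of $\mathbb R^d$ with ratios $r_i\in(0,1)$ satisfying the open set condition; $K$ the self-similar set, $\alpha$ its Hausdorff dimension ($\sum r_i^\alpha=1$), $r=\min r_i$. $\Sigma^*$ finite words with empty word $\vartheta$, $S_{\mathbf x}=S_{i_1}\circ\cdots\circ S_{i_k}$, $r_{\mathbf x}=r_{i_1}\cdots r_{i_k}$. $\mathcal J_0=\{\vartheta\}$, $\mathcal J_n=\{i_1\cdots i_k:r_{i_1\cdots i_k}\le r^n<r_{i_1\cdots i_{k-1}}\}$, $X=\bigcup_n\mathcal J_n$, $|\mathbf x|=n$ on $\mathcal J_n$, parent $\mathbf x^-$ the prefix in $\mathcal J_{n-1}$. Edges: $\{\mathbf x,\mathbf x^-\}$ and horizontal $\{\mathbf x,\mathbf y\}$ ($\mathbf x\ne\mathbf y\in\mathcal J_n$, $\inf_{\xi,\eta\in K}|S_{\mathbf x}(\xi)-S_{\mathbf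 y}(\eta)|\le\gamma r^n$); $\mathbf x\sim\mathbf y$ denotes adjacency. A geodesic ray is $(\mathbf x_n)$, $\mathbf x_n\in\mathcal J_n$, each a prefix of the next; it converges to $\xi$ if $\xi\in S_{\mathbf x_n}(K)$ for all $n$. The $\lambda$-NRW conductances: $c(\mathbf x,\mathbf x^-)=r_{\mathbf x}^\alpha\lambda^{-|\mathbf x|}$, $c(\mathbf x,\mathbf y)\asymp r_{\mathbf x}^\alpha\lambda^{-|\mathbf x|}$ for horizontal edges, zero otherwise. $\mathcal E_X[f]=\frac12\sum_{\mathbf x\sim\mathbf y}c(\mathbf x,\mathbf y)(f(\mathbf x)-f(\mathbf y))^2$, $\mathcal D_X=\{f:X\to\mathbb R:\mathcal E_X[f]<\infty\}$. *)

theory Defs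
  imports "HOL-Analysis.Analysis" "HOL-Library.Sublist"
begin

definition similitude :: "('a::metric_space \<Rightarrow> 'a) \<Rightarrow> real \<Rightarrow> bool" where
  "similitude f c \<longleftrightarrow> (\<forall>x y. dist (f x) (f y) = c * dist x y)"

definition open_set_condition :: "nat \<Rightarrow> (nat \<Rightarrow> 'a::metric_space \<Rightarrow> 'a) \<Rightarrow> bool" where
  "open_set_condition N S \<longleftrightarrow>
     (\<exists>U. open U \<and> bounded U \<and> U \<noteq> {} \<and> (\<forall>i<N. S i ` U \<subseteq> U) \<and>
          (\<forall>i<N. \<forall>j<N. i \<noteq> j \<longrightarrow> S i ` U \<inter> S j ` U = {}))"

definition words :: "nat \<Rightarrow> nat list set" where
  "words N = {w. set w \<subseteq> {..<N}}"

definition r_word :: "(nat \<Rightarrow> real) \<Rightarrow> nat list \<Rightarrow> real" where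
  "r_word r w = prod_list (map r w)"

definition S_word :: "(nat \<Rightarrow> 'a \<Rightarrow> 'a) \<Rightarrow> nat list \<Rightarrow> 'a \<Rightarrow> 'a" where
  "S_word S w = foldr (\<lambda>i g. S i \<circ> g) w id"

definition rmin :: "nat \<Rightarrow> (nat \<Rightarrow> real) \<Rightarrow> real" where
  "rmin N r = Min (r ` {..<N})"

definition J :: "nat \<Rightarrow> (nat \<Rightarrow> real) \<Rightarrow> nat \<Rightarrow> nat list set" where
  "J N r n = (if n = 0 then {[]} else
     {w \<in> words N. w \<noteq> [] \<and> r_word r w \<le> rmin N r ^ n \<and> rmin N r ^ n < r_word r (butlast w)})"

definition XX :: "nat \<Rightarrow> (nat \<Rightarrow> real) \<Rightarrow> nat list set" where
  "XX N r = (\<Union>n. J N r n)"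

definition vert_edge :: "nat \<Rightarrow> (nat \<Rightarrow> real) \<Rightarrow> nat list \<Rightarrow> nat list \<Rightarrow> nat \<Rightarrow> bool" where
  "vert_edge N r x y n \<longleftrightarrow> 1 \<le> n \<and> x \<in> J N r n \<and> y \<in> J N r (n - 1) \<and> prefix y x"

definition horiz_edge :: "nat \<Rightarrow> (nat \<Rightarrow> real) \<Rightarrow> (nat \<Rightarrow> 'a::metric_space \<Rightarrow> 'a) \<Rightarrow> 'a set \<Rightarrow> real
     \<Rightarrow> nat list \<Rightarrow> nat list \<Rightarrow> nat \<Rightarrow> bool" where
  "horiz_edge N r S K \<gamma> x y n \<longleftrightarrow> x \<noteq> y \<and> x \<in> J N r n \<and> y \<in> J N r n \<and>
     (INF p\<in>K \<times> K. dist (S_word S x (fst p)) (S_word S y (snd p))) \<le> \<gamma> * rmin N r ^ n"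

definition adj :: "nat \<Rightarrow> (nat \<Rightarrow> real) \<Rightarrow> (nat \<Rightarrow> 'a::metric_space \<Rightarrow> 'a) \<Rightarrow> 'a set \<Rightarrow> real
     \<Rightarrow> nat list \<Rightarrow> nat list \<Rightarrow> bool" where
  "adj N r S K \<gamma> x y \<longleftrightarrow>
     (\<exists>n. vert_edge N r x y n \<or> vert_edge N r y x n \<or> horiz_edge N r S K \<gamma> x y n)"

definition nrw_conductance :: "nat \<Rightarrow> (nat \<Rightarrow> real) \<Rightarrow> (nat \<Rightarrow> 'a::metric_space \<Rightarrow> 'a) \<Rightarrow> 'a set \<Rightarrow> real
     \<Rightarrow> real \<Rightarrow> real \<Rightarrow> (nat list \<Rightarrow> nat list \<Rightarrow> real) \<Rightarrow> bool" where
  "nrw_conductance N r S K \<gamma> \<alpha> lam c \<longleftrightarrow>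
     (\<forall>x y. c x y = c y x) \<and>
     (\<forall>x y. \<not> adj N r S K \<gamma> x y \<longrightarrow> c x y = 0) \<and>
     (\<forall>x y n. vert_edge N r x y n \<longrightarrow> c x y = r_word r x powr \<alpha> / lam ^ n) \<and>
     (\<exists>C1 C2. 0 < C1 \<and> C1 \<le> C2 \<and>
        (\<forall>x y n. horiz_edge N r S K \<gamma> x y n \<longrightarrow>
           C1 * (r_word r x powr \<alpha> / lam ^ n) \<le> c x y \<and>
           c x y \<le> C2 * (r_word r x powr \<alpha> / lam ^ n)))"

text \<open>Energy E_X[f] = 1/2 sum over ordered adjacent pairs; D_X = functions of finite energy
  (the terms are nonnegative, so finiteness is summability).\<close>
definition energy :: "(nat list \<Rightarrow> nat list \<Rightarrow> bool) \<Rightarrow> (nat list \<Rightarrow> nat list \<Rightarrow> real)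
     \<Rightarrow> (nat list \<Rightarrow> real) \<Rightarrow> real" where
  "energy A c f = (1/2) * (\<Sum>\<^sub>\<infinity>(x,y)\<in>{(x,y). A x y}. c x y * (f x - f y)^2)"

definition dirichlet_dom :: "(nat list \<Rightarrow> nat list \<Rightarrow> bool) \<Rightarrow> (nat list \<Rightarrow> nat list \<Rightarrow> real)
     \<Rightarrow> (nat list \<Rightarrow> real) set" where
  "dirichlet_dom A c = {f. (\<lambda>(x,y). c x y * (f x - f y)^2) summable_on {(x,y). A x y}}"

definition geodesic_ray :: "nat \<Rightarrow> (nat \<Rightarrow> real) \<Rightarrow> (nat \<Rightarrow> nat list) \<Rightarrow> bool" where
  "geodesic_ray N r xs \<longleftrightarrow> (\<forall>n. xs n \<in> J N r n \<and> prefix (xs n) (xs (Suc n)))"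

definition ray_converges_to :: "(nat \<Rightarrow> 'a \<Rightarrow> 'a) \<Rightarrow> 'a set \<Rightarrow> (nat \<Rightarrow> nat list) \<Rightarrow> 'a \<Rightarrow> bool" where
  "ray_converges_to S K xs \<xi> \<longleftrightarrow> (\<forall>n. \<xi> \<in> S_word S (xs n) ` K)"

end

theory Submission
  imports Defs
begin

lemma term_le:
  fixes g :: "'b \<Rightarrow> real"
  assumes "g summable_on A" "\<forall>x\<in>A. 0 \<le> g x" "p\<in>A" shows "g p \<le> infsum g A"
proof -
  have "infsum g {p} \<le> infsum g A"
    by (rule infsum_mono2) (use assms in auto)
  then show ?thesis by simp
qed

lemma G:
  fixes c d E B q :: real
  assumes "c * d^2 \<le> E" "B / q^n \<le> c" "0 < B" "0 < q"
  shows "\<bar>d\<bar> \<le> sqrt (E/B) * sqrt q ^ n"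
proof -
  have qn: "0 < q^n" using assms by simp
  have cpos: "0 < c" using assms(2,3) qn by (smt (verit) divide_pos_pos)
  have E0: "0 \<le> E" using assms(1) cpos by (smt (verit) mult_nonneg_nonneg zero_le_power2)
  have "d^2 \<le> E / c" using assms(1) cpos by (simp add: field_simps mult.commute)
  also have "\<dots> \<le> E / (B / q^n)" using E0 assms(2,3) qn cpos
    by (intro divide_left_mono) (auto intro: mult_pos_pos)
  also have "\<dots> = (E/B) * q^n" by simp
  finally have "sqrt (d^2) \<le> sqrt ((E/B) * q^n)" by (rule real_sqrt_le_mono)
  then have "\<bar>d\<bar> \<le> sqrt (E/B) * sqrt (q^n)" by (simp only: real_sqrt_abs real_sqrt_mult)
  then show ?thesis by (simp only: real_sqrt_power)
qed

lemma powr_sq: "0<(q::real) \<Longrightarrow> q powr (real n / 2) = sqrt q ^ n"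
  by (simp add: powr_half_sqrt[symmetric] powr_powr powr_realpow[symmetric] powr_mult_base)

lemma pow_powr: "0 < (x::real) \<Longrightarrow> (x ^ m) powr a = (x powr a) ^ m"
  by (simp add: powr_power powr_realpow[symmetric] powr_powr mult.commute)

lemma rword_lower:
  assumes x: "x \<in> J N r n" and rho: "\<forall>i<N. rmin N r \<le> r i" "0 < rmin N r" "rmin N r < 1"
  shows "rmin N r ^ Suc n \<le> r_word r x"
proof (cases "n = 0")
  case True
  then have "x = []" using x by (simp add: J_def)
  then show ?thesis using True rho by (simp add: r_word_def)
next
  case False
  then have xw: "x \<in> words N" "x \<noteq> []" "rmin N r ^ n < r_word r (butlast x)"
    using x by (auto simp: J_def)
  have dec: "x = butlast x @ [last x]" using xw(2) by simp
  have "r_word r x = r_word r (butlast x) * r (last x)"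
    by (subst dec) (simp add: r_word_def)
  moreover have "last x < N" using xw(1,2) last_in_set[of x] unfolding words_def by blast
  then have "rmin N r \<le> r (last x)" using rho by auto
  ultimately show ?thesis using xw(3) rho(2)
    by (simp add: mult.commute mult_mono less_imp_le)
qed

theorem lemma3p3:
  fixes N :: nat and S :: "nat \<Rightarrow> 'a::euclidean_space \<Rightarrow> 'a" and r :: "nat \<Rightarrow> real"
    and K :: "'a set" and \<alpha> \<gamma> lam :: real
    and c :: "nat list \<Rightarrow> nat list \<Rightarrow> real" and f :: "nat list \<Rightarrow> real"
  assumes N: "N \<ge> 2"
    and ratios: "\<forall>i<N. 0 < r i \<and> r i < 1"
    and sim: "\<forall>i<N. similitude (S i) (r i)"
    and osc: "open_set_condition N S"
    and K: "compact K" "K \<noteq> {}" "K = (\<Union>i<N. S i ` K)"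
    and alpha: "(\<Sum>i<N. r i powr \<alpha>) = 1"
    and gamma: "\<gamma> > 0"
    and lam: "0 < lam" "lam < rmin N r powr \<alpha>"
    and cond: "nrw_conductance N r S K \<gamma> \<alpha> lam c"
    and f: "f \<in> dirichlet_dom (adj N r S K \<gamma>) c"
  shows "(\<exists>C>0. \<forall>xs. geodesic_ray N r xs \<longrightarrow>
            (\<forall>n. \<bar>f (xs (Suc n)) - f (xs n)\<bar> \<le> C * (lam / rmin N r powr \<alpha>) powr (real n / 2)))
       \<and> (\<forall>xs. geodesic_ray N r xs \<longrightarrow> convergent (\<lambda>n. f (xs n)))
       \<and> (\<forall>xs ys \<xi>. geodesic_ray N r xs \<and> geodesic_ray N r ys \<and> \<xi> \<in> K \<and>
            ray_converges_to S K xs \<xi> \<and> ray_converges_to S K ys \<xi> \<longrightarrow>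
            lim (\<lambda>n. f (xs n)) = lim (\<lambda>n. f (ys n)))"
proof -
  define \<rho> where "\<rho> = rmin N r"
  have fin: "finite (r ` {..<N})" "r ` {..<N} \<noteq> {}" using N by (auto simp: lessThan_empty_iff)
  have rho_in: "\<rho> \<in> r ` {..<N}" unfolding \<rho>_def rmin_def using fin by (rule Min_in)
  have rho_le: "\<forall>i<N. \<rho> \<le> r i" unfolding \<rho>_def rmin_def using fin by auto
  have rho0: "0 < \<rho>" "\<rho> < 1" using rho_in ratios by auto
  have alpha0: "0 < \<alpha>"
  proof (rule ccontr)
    assume "\<not> 0 < \<alpha>"
    then have "\<forall>i<N. 1 \<le> r i powr \<alpha>" using ratios
      by (smt (verit, ccfv_SIG) powr01_less_one)
    then have "(\<Sum>i<N. (1::real)) \<le> (\<Sum>i<N. r i powr \<alpha>)" by (intro sum_mono) auto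
    then show False using alpha N by simp
  qed
  define P where "P = \<rho> powr \<alpha>"
  have P0: "0 < P" using rho0 by (simp add: P_def)
  define q where "q = lam / P"
  have q0: "0 < q" "q < 1" using lam P0 by (auto simp: q_def P_def \<rho>_def)
  have rwl: "P ^ Suc n \<le> r_word r x powr \<alpha>" if "x \<in> J N r n" for x n
  proof -
    have "\<rho> ^ Suc n \<le> r_word r x" using rword_lower[OF that] rho_le rho0 by (simp add: \<rho>_def)
    then have "(\<rho> ^ Suc n) powr \<alpha> \<le> r_word r x powr \<alpha>"
      using rho0 alpha0 by (intro powr_mono2) auto
    moreover have "(\<rho> ^ Suc n) powr \<alpha> = P ^ Suc n" using pow_powr[OF rho0(1)] by (simp only: P_def)
    ultimately show ?thesis by simp
  qed
  obtain C1 C2 where C12: "0 < C1" "C1 \<le> C2"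
    and hor: "\<And>x y n. horiz_edge N r S K \<gamma> x y n \<Longrightarrow>
           C1 * (r_word r x powr \<alpha> / lam ^ n) \<le> c x y"
    using cond unfolding nrw_conductance_def by blast
  have ver: "\<And>x y n. vert_edge N r x y n \<Longrightarrow> c x y = r_word r x powr \<alpha> / lam ^ n"
    and csym: "\<And>x y. c x y = c y x"
    using cond unfolding nrw_conductance_def by blast+
  define A where "A = {(x,y). adj N r S K \<gamma> x y}"
  define g where "g = (\<lambda>(x,y). c x y * (f x - f y)^2)"
  define E where "E = infsum g A"
  have summ: "g summable_on A" using f by (simp add: dirichlet_dom_def A_def g_def)
  have cnn: "0 \<le> c x y" if adjxy: "adj N r S K \<gamma> x y" for x y
  proof -
    obtain n where "vert_edge N r x y n \<or> vert_edge N r y x n \<or> horiz_edge N r S K \<gamma> x y n"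
      using adjxy unfolding adj_def by blast
    then show ?thesis
    proof (elim disjE)
      assume "vert_edge N r x y n" then show ?thesis using ver[of x y n] lam by simp
    next
      assume "vert_edge N r y x n" then show ?thesis using ver[of y x n] lam csym[of x y] by simp
    next
      assume "horiz_edge N r S K \<gamma> x y n"
      then have "C1 * (r_word r x powr \<alpha> / lam ^ n) \<le> c x y" by (rule hor)
      moreover have "0 \<le> C1 * (r_word r x powr \<alpha> / lam ^ n)" using lam C12 by simp
      ultimately show ?thesis by linarith
    qed
  qed
  have bnd: "c x y * (f x - f y)^2 \<le> E" if adxy: "adj N r S K \<gamma> x y" for x y
  proof -
    have nn: "\<forall>p\<in>A. 0 \<le> g p" using cnn by (auto simp: A_def g_def)
    have xyA: "(x,y) \<in> A" using adxy by (simp add: A_def)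
    have "g (x,y) \<le> E" unfolding E_def by (rule term_le[OF summ nn xyA])
    then show ?thesis by (simp add: g_def)
  qed
  define B where "B = P^2 / lam"
  have B0: "0 < B" using P0 lam by (simp add: B_def)
  define C where "C = sqrt (E/B) + 1"
  have E0: "0 \<le> E" unfolding E_def using cnn
    by (intro infsum_nonneg) (auto simp: A_def g_def)
  have C0: "0 < C" using E0 B0 by (simp add: C_def add_nonneg_pos)
  have step: "\<bar>f (xs (Suc n)) - f (xs n)\<bar> \<le> sqrt (E/B) * sqrt q ^ n"
    if xs: "geodesic_ray N r xs" for xs n
  proof -
    have v: "vert_edge N r (xs (Suc n)) (xs n) (Suc n)"
      using xs by (simp add: geodesic_ray_def vert_edge_def)
    then have ad: "adj N r S K \<gamma> (xs (Suc n)) (xs n)" by (auto simp: adj_def)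
    have "B / q^n = P ^ Suc (Suc n) / lam ^ Suc n"
      using P0 lam by (simp add: B_def q_def field_simps power2_eq_square)
    also have "\<dots> \<le> r_word r (xs (Suc n)) powr \<alpha> / lam ^ Suc n"
      using rwl[of "xs (Suc n)" "Suc n"] v lam by (intro divide_right_mono) (auto simp: vert_edge_def)
    also have "\<dots> = c (xs (Suc n)) (xs n)" using ver[OF v] by simp
    finally show ?thesis using G[OF bnd[OF ad] _ B0 q0(1)] by blast
  qed
  have part1: "\<exists>C>0. \<forall>xs. geodesic_ray N r xs \<longrightarrow>
            (\<forall>n. \<bar>f (xs (Suc n)) - f (xs n)\<bar> \<le> C * (lam / rmin N r powr \<alpha>) powr (real n / 2))"
  proof (intro exI[of _ C] conjI allI impI)
    fix xs n assume xs: "geodesic_ray N r xs"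
    have "sqrt (E/B) * sqrt q ^ n \<le> C * sqrt q ^ n" using q0 by (intro mult_right_mono) (auto simp: C_def)
    then show "\<bar>f (xs (Suc n)) - f (xs n)\<bar> \<le> C * (lam / rmin N r powr \<alpha>) powr (real n / 2)"
      using step[OF xs, of n] powr_sq[OF q0(1), of n] by (simp add: q_def P_def \<rho>_def)
  qed (rule C0)
  have geo: "summable (\<lambda>n. sqrt (E/B) * sqrt q ^ n)"
    using q0 by (intro summable_mult summable_geometric) auto
  have part2: "convergent (\<lambda>n. f (xs n))" if xs: "geodesic_ray N r xs" for xs
  proof -
    have sd: "summable (\<lambda>n. f (xs (Suc n)) - f (xs n))"
      by (rule summable_comparison_test[OF _ geo]) (use step[OF xs] in auto)
    have "(\<lambda>n. \<Sum>k<n. f (xs (Suc k)) - f (xs k)) \<longlonglongrightarrow> suminf (\<lambda>n. f (xs (Suc n)) - f (xs n))"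
      using summable_LIMSEQ[OF sd] .
    then have "(\<lambda>n. f (xs n) - f (xs 0)) \<longlonglongrightarrow> suminf (\<lambda>n. f (xs (Suc n)) - f (xs n))"
      using sum_lessThan_telescope[of "\<lambda>k. f (xs k)"] by simp
    then have "(\<lambda>n. (f (xs n) - f (xs 0)) + f (xs 0)) \<longlonglongrightarrow> suminf (\<lambda>n. f (xs (Suc n)) - f (xs n)) + f (xs 0)"
      by (intro tendsto_add) auto
    then show ?thesis by (auto simp: convergent_def)
  qed
  define B2 where "B2 = C1 * P"
  have B20: "0 < B2" using C12 P0 by (simp add: B2_def)
  have part3: "lim (\<lambda>n. f (xs n)) = lim (\<lambda>n. f (ys n))"
    if xs: "geodesic_ray N r xs" and ys: "geodesic_ray N r ys"
      and cx: "ray_converges_to S K xs \<xi>" and cy: "ray_converges_to S K ys \<xi>" for xs ys \<xi>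
  proof -
    have hb: "\<bar>f (xs n) - f (ys n)\<bar> \<le> sqrt (E/B2) * sqrt q ^ n" for n
    proof (cases "xs n = ys n")
      case True then show ?thesis using q0 E0 B20 by simp
    next
      case False
      obtain a where a: "a \<in> K" "\<xi> = S_word S (xs n) a" using cx by (auto simp: ray_converges_to_def)
      obtain b where b: "b \<in> K" "\<xi> = S_word S (ys n) b" using cy by (auto simp: ray_converges_to_def)
      have "(INF p\<in>K \<times> K. dist (S_word S (xs n) (fst p)) (S_word S (ys n) (snd p)))
            \<le> dist (S_word S (xs n) (fst (a,b))) (S_word S (ys n) (snd (a,b)))"
        by (rule cINF_lower) (auto intro: bdd_belowI[where m=0] simp: a b)
      also have "\<dots> = 0" using a b by simp
      finally have h: "horiz_edge N r S K \<gamma> (xs n) (ys n) n"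
        using False xs ys gamma rho0 by (auto simp: horiz_edge_def geodesic_ray_def \<rho>_def intro!: order.trans[OF _ mult_nonneg_nonneg])
      then have ad: "adj N r S K \<gamma> (xs n) (ys n)" by (auto simp: adj_def)
      have xn: "xs n \<in> J N r n" using xs by (simp add: geodesic_ray_def)
      have "B2 / q^n = C1 * (P ^ Suc n / lam ^ n)"
        using P0 lam by (simp add: B2_def q_def field_simps)
      also have "\<dots> \<le> C1 * (r_word r (xs n) powr \<alpha> / lam ^ n)"
        using rwl[OF xn] lam C12 by (intro mult_left_mono divide_right_mono) auto
      also have "\<dots> \<le> c (xs n) (ys n)" by (rule hor[OF h])
      finally show ?thesis using G[OF bnd[OF ad] _ B20 q0(1)] by blast
    qed
    have z: "(\<lambda>n. sqrt (E/B2) * sqrt q ^ n) \<longlonglongrightarrow> 0"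
      using q0 by (intro tendsto_mult_right_zero LIMSEQ_power_zero) auto
    have d0: "(\<lambda>n. f (xs n) - f (ys n)) \<longlonglongrightarrow> 0"
      by (rule Lim_null_comparison[OF _ z]) (use hb in auto)
    have "(\<lambda>n. f (xs n)) \<longlonglongrightarrow> lim (\<lambda>n. f (xs n))" "(\<lambda>n. f (ys n)) \<longlonglongrightarrow> lim (\<lambda>n. f (ys n))"
      using part2[OF xs] part2[OF ys] by (auto simp: convergent_LIMSEQ_iff)
    then have "(\<lambda>n. f (xs n) - f (ys n)) \<longlonglongrightarrow> lim (\<lambda>n. f (xs n)) - lim (\<lambda>n. f (ys n))"
      by (intro tendsto_diff)
    with d0 have "lim (\<lambda>n. f (xs n)) - lim (\<lambda>n. f (ys n)) = 0" using LIMSEQ_unique by blast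
    then show ?thesis by simp
  qed
  show ?thesis using part1 part2 part3 by blast
qed

end
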